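(* Let $0<\mu\le L$, $\kappa=L/\mu$, and $0<\sigma<1$. For $\eta>0$ define $$G(\eta)=\begin{bmatrix}\sigma+\eta\frac{L}{\mu} & \frac{\eta}{\mu} & \eta\frac{L}{\mu}\\ 2L+\eta\frac{L^2}{\mu} & \sigma+\eta\frac{L}{\mu} & \eta\frac{L^2}{\mu}\\ \eta\frac{L}{\mu} & \frac{\eta}{\mu} & 1-\eta\frac{\mu}{L}\end{bmatrix}.$$ If $0<\eta<\bar\eta=\dfrac{(1-\sigma)^2}{2(2-\sigma)(\kappa+\kappa^3)}$, then the spectral radius satisfies $\rho(G(\eta))<1$.
   Context: In the paper, $\mu$ and $L$ are the strong convexity and smoothness constants of the local cost functions ($\mu I\preceq\nabla^2 f_i\preceq LI$), $\sigma=\|W-\frac1N\mathbf{1}\mathbf{1}^T\|_2$ is the spectral norm associated with a symmetric doubly stochastic consensus matrix $W$ of a connected graph, and $G(\eta)$ is the matrix governing the Network-GIANT error recursion (consensus error, gradient-tracking error, optimality gap). $\rho(\cdot)$ denotes the spectral radius. *)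

theory Defs
  imports "Jordan_Normal_Form.Spectral_Radius"
begin

definition G_mat :: "real \<Rightarrow> real \<Rightarrow> real \<Rightarrow> real \<Rightarrow> real mat" where
  "G_mat \<mu> L \<sigma> \<eta> = mat_of_rows_list 3
     [[\<sigma> + \<eta> * L / \<mu>,        \<eta> / \<mu>,           \<eta> * L / \<mu>],
      [2 * L + \<eta> * L^2 / \<mu>,  \<sigma> + \<eta> * L / \<mu>,  \<eta> * L^2 / \<mu>],
      [\<eta> * L / \<mu>,            \<eta> / \<mu>,           1 - \<eta> * \<mu> / L]]"

definition G_cmat :: "real \<Rightarrow> real \<Rightarrow> real \<Rightarrow> real \<Rightarrow> complex mat" where
  "G_cmat \<mu> L \<sigma> \<eta> = map_mat complex_of_real (G_mat \<mu> L \<sigma> \<eta>)"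

end

theory Submission
  imports Defs
begin

lemma weighted_bound:
  fixes g :: "nat \<Rightarrow> nat \<Rightarrow> real" and x :: "nat \<Rightarrow> real" and v :: "nat \<Rightarrow> complex"
  assumes g0: "\<forall>i<n. \<forall>j<n. g i j \<ge> 0" and xp: "\<forall>i<n. x i > 0"
    and rows: "\<forall>i<n. (\<Sum>j<n. g i j * x j) < x i"
    and ev: "\<forall>i<n. lam * v i = (\<Sum>j<n. complex_of_real (g i j) * v j)"
    and nz: "\<exists>i<n. v i \<noteq> 0"
  shows "norm lam < 1"
proof -
  define f where "f j = norm (v j) / x j" for j
  have ne: "{..<n} \<noteq> {}" using nz by auto
  define M where "M = Max (f ` {..<n})"
  have "M \<in> f ` {..<n}" unfolding M_def using ne by (intro Max_in) auto
  then obtain i where i: "i < n" "f i = M" by auto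
  have Mge: "f j \<le> M" if "j < n" for j unfolding M_def using that by (intro Max_ge) auto
  from nz obtain i0 where i0: "i0 < n" "v i0 \<noteq> 0" by auto
  have "f i0 > 0" unfolding f_def using i0 xp by auto
  hence Mpos: "M > 0" using Mge[OF i0(1)] by linarith
  have vj: "norm (v j) \<le> M * x j" if "j < n" for j
    using Mge[OF that] xp that unfolding f_def by (simp add: divide_le_eq)
  have vi: "norm (v i) = M * x i" using i xp unfolding f_def by (auto simp: divide_eq_eq split: if_splits)
  have "norm lam * norm (v i) = norm (\<Sum>j<n. complex_of_real (g i j) * v j)"
    using ev i by (metis norm_mult)
  also have "\<dots> \<le> (\<Sum>j<n. norm (complex_of_real (g i j) * v j))" by (rule norm_sum)
  also have "\<dots> = (\<Sum>j<n. g i j * norm (v j))"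
    using g0 i by (intro sum.cong) (auto simp: norm_mult)
  also have "\<dots> \<le> (\<Sum>j<n. g i j * (M * x j))"
    using g0 i vj by (intro sum_mono mult_left_mono) auto
  also have "\<dots> = M * (\<Sum>j<n. g i j * x j)" by (simp add: sum_distrib_left algebra_simps)
  also have "\<dots> < M * x i" using rows i Mpos by auto
  finally have "norm lam * (M * x i) < 1 * (M * x i)" using vi by simp
  moreover have "M * x i > 0" using Mpos xp i by auto
  ultimately show ?thesis by (meson mult_less_cancel_right_pos)
qed

lemma G_entries:
  "G_mat \<mu> L \<sigma> \<eta> $$ (0,0) = \<sigma> + \<eta> * L / \<mu>"
  "G_mat \<mu> L \<sigma> \<eta> $$ (0,1) = \<eta> / \<mu>"
  "G_mat \<mu> L \<sigma> \<eta> $$ (0,2) = \<eta> * L / \<mu>"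
  "G_mat \<mu> L \<sigma> \<eta> $$ (1,0) = 2 * L + \<eta> * L^2 / \<mu>"
  "G_mat \<mu> L \<sigma> \<eta> $$ (1,1) = \<sigma> + \<eta> * L / \<mu>"
  "G_mat \<mu> L \<sigma> \<eta> $$ (1,2) = \<eta> * L^2 / \<mu>"
  "G_mat \<mu> L \<sigma> \<eta> $$ (2,0) = \<eta> * L / \<mu>"
  "G_mat \<mu> L \<sigma> \<eta> $$ (2,1) = \<eta> / \<mu>"
  "G_mat \<mu> L \<sigma> \<eta> $$ (2,2) = 1 - \<eta> * \<mu> / L"
  unfolding G_mat_def mat_of_rows_list_def by (subst index_mat; simp)+
lemma G_dims: "G_mat \<mu> L \<sigma> \<eta> \<in> carrier_mat 3 3" "G_cmat \<mu> L \<sigma> \<eta> \<in> carrier_mat 3 3"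
proof -
  show 1: "G_mat \<mu> L \<sigma> \<eta> \<in> carrier_mat 3 3"
    unfolding G_mat_def mat_of_rows_list_def using mat_carrier[of 3 3] by (simp add: numeral_3_eq_3)
  show "G_cmat \<mu> L \<sigma> \<eta> \<in> carrier_mat 3 3" unfolding G_cmat_def using 1 by simp
qed

lemma sum3: "(\<Sum>j<(3::nat). f j) = f 0 + f 1 + (f 2 :: 'a :: comm_monoid_add)"
  by (simp add: eval_nat_numeral lessThan_Suc ac_simps)

theorem theorem2:
  fixes \<mu> L \<sigma> \<eta> :: real
  assumes "0 < \<mu>" and "\<mu> \<le> L"
    and "0 < \<sigma>" and "\<sigma> < 1"
    and "0 < \<eta>"
    and "\<eta> < (1 - \<sigma>)^2 / (2 * (2 - \<sigma>) * (L / \<mu> + (L / \<mu>)^3))"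
  shows "spectral_radius (G_cmat \<mu> L \<sigma> \<eta>) < 1"
proof -
  define s where "s = 1 - \<sigma>"
  define k where "k = L / \<mu>"
  define a where "a = \<eta> * k"
  have s0: "0 < s" "s < 1" using assms(3,4) unfolding s_def by auto
  have k1: "1 \<le> k" using assms(1,2) unfolding k_def by simp
  have Lpos: "L > 0" using assms(1,2) by simp
  have a0: "a > 0" unfolding a_def using k1 assms(5) by simp
  have den: "2 * (2 - \<sigma>) * (L / \<mu> + (L / \<mu>)^3) = 2 * (1 + s) * k * (1 + k^2)"
    proof -
    have "2 - \<sigma> = 1 + s" unfolding s_def by simp
    moreover have "k + k^3 = k * (1 + k^2)" by (simp add: algebra_simps power3_eq_cube power2_eq_square)
    ultimately show ?thesis unfolding k_def[symmetric] by simp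
  qed
  have denpos: "2 * (1 + s) * k * (1 + k^2) > 0" using s0 k1 by (simp add: add_pos_nonneg)
  have hyp: "a * (2 + 2 * s) * (1 + k^2) < s^2"
  proof -
    have "\<eta> < s^2 / (2 * (2 - \<sigma>) * (L / \<mu> + (L / \<mu>)^3))" using assms(6) unfolding s_def .
    also have "\<dots> = s^2 / (2 * (1 + s) * k * (1 + k^2))" unfolding den ..
    finally have "\<eta> < s^2 / (2 * (1 + s) * k * (1 + k^2))" .
    hence "\<eta> * (2 * (1 + s) * k * (1 + k^2)) < s^2" using denpos by (simp add: pos_less_divide_eq)
    thus ?thesis unfolding a_def by (simp add: algebra_simps)
  qed
  define \<epsilon> where "\<epsilon> = (s^2 - a * (2 + 2 * s) * (1 + k^2)) / (2 * a)"
  have eps: "\<epsilon> > 0" unfolding \<epsilon>_def using hyp a0 by simp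
  define x2 where "x2 = k^2 * (2 + 2 * s) + \<epsilon>"
  have key: "a * (2 + 2 * s + x2) < s^2"
  proof -
    have "a * (2 + 2 * s + x2) = a * (2 + 2 * s) * (1 + k^2) + a * \<epsilon>"
      unfolding x2_def by (simp add: algebra_simps)
    also have "a * \<epsilon> = (s^2 - a * (2 + 2 * s) * (1 + k^2)) / 2" unfolding \<epsilon>_def using a0 by simp
    finally have eq: "a * (2 + 2 * s + x2) = a * (2 + 2 * s) * (1 + k^2) + (s^2 - a * (2 + 2 * s) * (1 + k^2)) / 2" .
    have gen: "T + (S - T) / 2 < S" if "T < S" for T S :: real using that by (simp add: field_simps)
    show ?thesis unfolding eq by (rule gen[OF hyp])
  qed
  have x2gt: "x2 > k^2 * (2 + 2 * s)" unfolding x2_def using eps by simp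
  have etak: "\<eta> \<le> k"
  proof -
    have k2: "1 \<le> k^2" using k1 by (simp add: one_le_power)
    have "(2::real) * 2 \<le> (2 + 2 * s) * (1 + k^2)"
      using s0 k2 by (intro mult_mono) auto
    hence "a * 4 \<le> a * ((2 + 2 * s) * (1 + k^2))" using a0 by simp
    moreover have "s^2 < 1" using s0 by (simp add: power_less_one_iff)
    ultimately have "a * 4 < 1" using hyp by (simp add: mult.assoc)
    hence "\<eta> * k * 4 < 1" unfolding a_def .
    moreover have "\<eta> * 4 \<le> \<eta> * k * 4" using k1 assms(5) by simp
    ultimately have "\<eta> * 4 < 1" by linarith
    thus ?thesis using k1 by simp
  qed
  define g where "g i j = G_mat \<mu> L \<sigma> \<eta> $$ (i,j)" for i j
  define x where "x j = [s, L * (2 + s), x2] ! j" for j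
  have e1: "\<eta> * L / \<mu> = a" unfolding a_def k_def by simp
  have e2: "\<eta> / \<mu> = a / L" unfolding a_def k_def using Lpos by simp
  have e3: "\<eta> * L^2 / \<mu> = a * L" unfolding a_def k_def by (simp add: power2_eq_square)
  have e4: "\<eta> * \<mu> / L = \<eta> / k" unfolding k_def by simp
  have kpos: "k > 0" using k1 by simp
  have ek: "\<eta> / k \<le> 1" using etak kpos by simp
  have gnn: "\<forall>i<3. \<forall>j<3. g i j \<ge> 0"
  proof (intro allI impI)
    fix i j :: nat assume "i < 3" "j < 3"
    hence "i = 0 \<or> i = 1 \<or> i = 2" "j = 0 \<or> j = 1 \<or> j = 2" by auto
    thus "g i j \<ge> 0" unfolding g_def using a0 Lpos assms(3) ek
      by (elim disjE) (simp_all add: G_entries G_entries[unfolded One_nat_def] e1 e2 e3 e4)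
  qed
  have xpos: "\<forall>i<3. x i > 0"
  proof (intro allI impI)
    fix i :: nat assume "i < 3"
    hence "i \<in> {0,1,2}" by auto
    moreover have "k^2 * (2 + 2 * s) \<ge> 0" using s0 by simp
    hence "x2 > 0" using x2gt by linarith
    ultimately show "x i > 0" unfolding x_def using s0 Lpos by auto
  qed
  have row0: "(\<Sum>j<3. g 0 j * x j) < x 0"
  proof -
    have "(\<Sum>j<3. g 0 j * x j) = (\<sigma> + a) * s + a / L * (L * (2 + s)) + a * x2"
      unfolding sum3 g_def x_def by (simp add: G_entries G_entries[unfolded One_nat_def] e1 e2)
    also have "\<dots> = s - s^2 + a * (2 + 2 * s + x2)"
      using Lpos unfolding s_def by (simp add: algebra_simps power2_eq_square)
    also have "\<dots> < s" using key by simp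
    finally show ?thesis unfolding x_def by simp
  qed
  have row1: "(\<Sum>j<3. g 1 j * x j) < x 1"
  proof -
    have "(\<Sum>j<3. g 1 j * x j) = (2 * L + a * L) * s + (\<sigma> + a) * (L * (2 + s)) + a * L * x2"
      unfolding sum3 g_def x_def by (simp add: G_entries G_entries[unfolded One_nat_def] e1 e2 e3)
    also have "\<dots> = L * ((2 + s) - s^2 + a * (2 + 2 * s + x2))"
      unfolding s_def by (simp add: algebra_simps power2_eq_square)
    also have "\<dots> < L * (2 + s)" using key Lpos by (intro mult_strict_left_mono) auto
    finally show ?thesis unfolding x_def by simp
  qed
  have row2: "(\<Sum>j<3. g 2 j * x j) < x 2"
  proof -
    have "(\<Sum>j<3. g 2 j * x j) = a * s + a / L * (L * (2 + s)) + (1 - \<eta> / k) * x2"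
      unfolding sum3 g_def x_def by (simp add: G_entries G_entries[unfolded One_nat_def] e1 e2 e4)
    also have "\<dots> = a * (2 + 2 * s) + x2 - \<eta> / k * x2"
      using Lpos by (simp add: algebra_simps)
    finally have eqr: "(\<Sum>j<3. g 2 j * x j) = a * (2 + 2 * s) + x2 - \<eta> / k * x2" .
    have "\<eta> / k * x2 > \<eta> / k * (k^2 * (2 + 2 * s))"
      using x2gt assms(5) kpos by (intro mult_strict_left_mono) auto
    moreover have "\<eta> / k * (k^2 * (2 + 2 * s)) = a * (2 + 2 * s)"
      unfolding a_def using kpos by (simp add: power2_eq_square)
    ultimately show ?thesis unfolding eqr unfolding x_def by simp
  qed
  have rows: "\<forall>i<3. (\<Sum>j<3. g i j * x j) < x i"
  proof (intro allI impI)
    fix i :: nat assume "i < 3"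
    hence "i = 0 \<or> i = 1 \<or> i = 2" by auto
    thus "(\<Sum>j<3. g i j * x j) < x i" using row0 row1 row2 by auto
  qed
  let ?G = "G_cmat \<mu> L \<sigma> \<eta>"
  have Gc: "?G \<in> carrier_mat 3 3" by (rule G_dims(2))
  from spectral_radius_mem_max(1)[OF Gc] obtain lam where
    lam: "lam \<in> spectrum ?G" "spectral_radius ?G = norm lam" by auto
  from lam(1) obtain v where v: "v \<in> carrier_vec 3" "v \<noteq> 0\<^sub>v 3" "?G *\<^sub>v v = lam \<cdot>\<^sub>v v"
    unfolding spectrum_def eigenvalue_def eigenvector_def using Gc by auto
  have nz: "\<exists>i<3. v $ i \<noteq> 0"
  proof (rule ccontr)
    assume "\<not> ?thesis"
    hence "v = 0\<^sub>v 3" using v(1) by (intro eq_vecI) auto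
    thus False using v(2) by simp
  qed
  have ev: "\<forall>i<3. lam * v $ i = (\<Sum>j<3. complex_of_real (g i j) * v $ j)"
  proof (intro allI impI)
    fix i :: nat assume i: "i < 3"
    have "lam * v $ i = (?G *\<^sub>v v) $ i" using v i by simp
    also have "\<dots> = row ?G i \<bullet> v" using Gc i by simp
    also have "\<dots> = (\<Sum>j<3. complex_of_real (g i j) * v $ j)"
      unfolding scalar_prod_def using v(1) Gc i
      by (intro sum.cong) (insert G_dims(1)[of \<mu> L \<sigma> \<eta>], auto simp: g_def G_cmat_def lessThan_atLeast0 index_row carrier_matD)
    finally show "lam * v $ i = (\<Sum>j<3. complex_of_real (g i j) * v $ j)" .
  qed
  have "norm lam < 1"
    by (rule weighted_bound[of 3 g x lam "\<lambda>j. v $ j"]) (use gnn xpos rows ev nz in auto)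
  thus ?thesis using lam(2) by simp
qed

end
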